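(* For every fixed integer $k \ge 1$, \[ \sum_{n \ge 0} w(n,k) q^n = \frac{q^{k+4}}{(1-q)^2(1-q^2)^{k+1}}, \] where $w(n,k)$ is the number of compositions of $n$ with all parts in $\{1,2\}$ having exactly $k$ water cells.
   Context: A composition of $n \ge 0$ is a finite sequence $(c_1,\dots,c_t)$ of positive integers with $c_1+\cdots+c_t=n$; the empty composition is the unique composition of $0$. Let $C_{12}(n)$ be the set of compositions of $n$ all of whose parts lie in $\{1,2\}$. The number of water cells of a composition $(c_1,\dots,c_t)$ is $\sum_{i=1}^{t} \max\bigl(0, \min(\max_{j \le i} c_j, \max_{j \ge i} c_j) - c_i\bigr)$ (the number of unit squares that would hold water poured over its bargraph, in which column $i$ has height $c_i$). For $n,k \ge 0$, $W(n,k)$ is the set of compositions in $C_{12}(n)$ with exactly $k$ water cells and $w(n,k)=|W(n,k)|$. *)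

theory Defs
  imports "HOL-Computational_Algebra.Formal_Power_Series"
begin

definition C12 :: "nat \<Rightarrow> nat list set" where
  "C12 n = {cs. set cs \<subseteq> {1, 2} \<and> sum_list cs = n}"

definition water_cells :: "nat list \<Rightarrow> nat" where
  "water_cells cs = (\<Sum>i<length cs.
      nat (max 0 (int (min (Max (set (take (Suc i) cs))) (Max (set (drop i cs)))) - int (cs ! i))))"

definition W :: "nat \<Rightarrow> nat \<Rightarrow> nat list set" where
  "W n k = {cs \<in> C12 n. water_cells cs = k}"

definition w :: "nat \<Rightarrow> nat \<Rightarrow> nat" where
  "w n k = card (W n k)"

end

theory Submission
  imports Defs
begin

fun wp :: "bool \<Rightarrow> nat list \<Rightarrow> nat" where
  "wp p [] = 0"
| "wp p (x#cs) = (if x = 1 \<and> p \<and> 2 \<in> set cs then 1 else 0) + wp (p \<or> x = 2) cs"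

lemma wp_no2: "2 \<notin> set cs \<Longrightarrow> wp p cs = 0"
  by (induction cs arbitrary: p) auto

lemma Max12: "S \<subseteq> {1,2::nat} \<Longrightarrow> S \<noteq> {} \<Longrightarrow> Max S = (if 2 \<in> S then 2 else 1)"
proof -
  assume a: "S \<subseteq> {1,2}" "S \<noteq> {}"
  then have "S = {1} \<or> S = {2} \<or> S = {1,2}" by auto
  then show ?thesis by auto
qed

lemma term_abs:
  assumes "set A \<subseteq> {1,2}" "set B \<subseteq> {1,2}" "c = 1 \<or> c = (2::nat)"
  shows "nat (max 0 (int (min (Max (set (A @ [c]))) (Max (set (c # B)))) - int c))
     = (if c = 1 \<and> 2 \<in> set A \<and> 2 \<in> set B then 1 else 0)"
proof -
  have a1: "set (A @ [c]) \<subseteq> {1,2}" using assms by auto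
  have a2: "set (c # B) \<subseteq> {1,2}" using assms by auto
  have m1: "Max (set (A @ [c])) = (if 2 \<in> set A \<or> c = 2 then 2 else 1)"
    using Max12[OF a1] by simp
  have m2: "Max (set (c # B)) = (if 2 \<in> set B \<or> c = 2 then 2 else 1)"
    using Max12[OF a2] by simp
  show ?thesis unfolding m1 m2 using assms(3) by (elim disjE) simp_all
qed

lemma term_eq:
  assumes "set cs \<subseteq> {1,2}" "i < length cs"
  shows "nat (max 0 (int (min (Max (set (take (Suc i) cs))) (Max (set (drop i cs)))) - int (cs ! i)))
     = (if cs!i = 1 \<and> 2 \<in> set (take i cs) \<and> 2 \<in> set (drop (Suc i) cs) then 1 else 0)"
proof -
  have t: "take (Suc i) cs = take i cs @ [cs!i]" using assms(2) by (simp add: take_Suc_conv_app_nth)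
  have d: "drop i cs = cs!i # drop (Suc i) cs" using assms(2) by (simp add: Cons_nth_drop_Suc)
  have s1: "set (take i cs) \<subseteq> {1,2}" by (rule subset_trans[OF set_take_subset assms(1)])
  have s2: "set (drop (Suc i) cs) \<subseteq> {1,2}" by (rule subset_trans[OF set_drop_subset assms(1)])
  have "cs!i \<in> set cs" using assms(2) by (rule nth_mem)
  then have ci: "cs!i = 1 \<or> cs!i = 2" using assms(1) by auto
  show ?thesis unfolding t d by (rule term_abs[OF s1 s2 ci])
qed

lemma sum_wp: "set cs \<subseteq> {1,2} \<Longrightarrow>
  (\<Sum>i<length cs. (if cs!i = 1 \<and> (p \<or> 2 \<in> set (take i cs)) \<and> 2 \<in> set (drop (Suc i) cs) then 1 else 0::nat)) = wp p cs"
proof (induction cs arbitrary: p)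
  case Nil then show ?case by simp
next
  case (Cons x cs)
  have ih: "(\<Sum>i<length cs. (if cs!i = 1 \<and> ((p \<or> x = 2) \<or> 2 \<in> set (take i cs)) \<and> 2 \<in> set (drop (Suc i) cs) then 1 else 0::nat)) = wp (p \<or> x = 2) cs"
    using Cons.IH[of "p \<or> x = 2"] Cons.prems by auto
  have r: "(\<Sum>i<length cs. (if (x#cs)!(Suc i) = 1 \<and> (p \<or> 2 \<in> set (take (Suc i) (x#cs))) \<and> 2 \<in> set (drop (Suc (Suc i)) (x#cs)) then 1 else 0::nat))
    = (\<Sum>i<length cs. (if cs!i = 1 \<and> ((p \<or> x = 2) \<or> 2 \<in> set (take i cs)) \<and> 2 \<in> set (drop (Suc i) cs) then 1 else 0::nat))"
    by (rule sum.cong) auto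
  have z: "(if (x#cs)!0 = 1 \<and> (p \<or> 2 \<in> set (take 0 (x#cs))) \<and> 2 \<in> set (drop (Suc 0) (x#cs)) then 1 else 0::nat)
     = (if x = 1 \<and> p \<and> 2 \<in> set cs then 1 else 0)" by simp
  show ?case unfolding length_Cons sum.lessThan_Suc_shift z r ih wp.simps by (rule refl)
qed

lemma wc_wp: "set cs \<subseteq> {1,2} \<Longrightarrow> water_cells cs = wp False cs"
proof -
  assume a: "set cs \<subseteq> {1,2}"
  have "water_cells cs = (\<Sum>i<length cs. (if cs!i = 1 \<and> (False \<or> 2 \<in> set (take i cs)) \<and> 2 \<in> set (drop (Suc i) cs) then 1 else 0::nat))"
    unfolding water_cells_def by (rule sum.cong) (auto simp: term_eq[OF a])
  then show ?thesis using sum_wp[OF a, of False] by simp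
qed


definition cnt :: "(nat list \<Rightarrow> bool) \<Rightarrow> nat \<Rightarrow> nat" where
  "cnt P n = card {cs \<in> C12 n. P cs}"

lemma len_le: "set cs \<subseteq> {1,2::nat} \<Longrightarrow> length cs \<le> sum_list cs"
  by (induction cs) auto

lemma fin_C12: "finite (C12 n)"
proof -
  have "C12 n \<subseteq> {cs. set cs \<subseteq> {1,2} \<and> length cs \<le> n}" unfolding C12_def using len_le by fastforce
  moreover have "finite {cs. set cs \<subseteq> {1,2::nat} \<and> length cs \<le> n}" by (rule finite_lists_length_le) simp
  ultimately show ?thesis by (rule finite_subset)
qed

lemma fin_sub: "finite {cs \<in> C12 n. P cs}"
  by (rule finite_subset[OF _ fin_C12]) auto

lemma C12_Nil: "[] \<in> C12 n \<longleftrightarrow> n = 0" by (auto simp: C12_def)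
lemma C12_Cons: "x#cs \<in> C12 n \<longleftrightarrow> (x = 1 \<or> x = 2) \<and> x \<le> n \<and> cs \<in> C12 (n - x)"
  by (auto simp: C12_def)

lemma C12_0: "C12 0 = {[]}"
proof (rule set_eqI)
  fix cs show "cs \<in> C12 0 \<longleftrightarrow> cs \<in> {[]}" by (cases cs) (auto simp: C12_Nil C12_Cons)
qed

lemma C12_1: "C12 (Suc 0) = {[1]}"
proof (rule set_eqI)
  fix cs show "cs \<in> C12 (Suc 0) \<longleftrightarrow> cs \<in> {[1]}" by (cases cs) (auto simp: C12_Nil C12_Cons C12_0)
qed

lemma cnt_0: "cnt P 0 = (if P [] then 1 else 0)"
proof -
  have "{cs \<in> C12 0. P cs} = (if P [] then {[]} else {})" unfolding C12_0 by auto
  then show ?thesis unfolding cnt_def by simp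
qed

lemma cnt_1: "cnt P (Suc 0) = (if P [1] then 1 else 0)"
proof -
  have "{cs \<in> C12 (Suc 0). P cs} = (if P [1] then {[1]} else {})" unfolding C12_1 by auto
  then show ?thesis unfolding cnt_def by simp
qed

lemma cnt_False: "cnt (\<lambda>_. False) n = 0" unfolding cnt_def by simp

lemma cnt_SS: "cnt P (Suc (Suc n)) = cnt (\<lambda>cs. P (1#cs)) (Suc n) + cnt (\<lambda>cs. P (2#cs)) n"
proof -
  let ?A = "{cs \<in> C12 (Suc n). P (1#cs)}"
  let ?B = "{cs \<in> C12 n. P (2#cs)}"
  have e: "{cs \<in> C12 (Suc (Suc n)). P cs} = Cons 1 ` ?A \<union> Cons 2 ` ?B"
  proof (rule set_eqI)
    fix cs show "cs \<in> {cs \<in> C12 (Suc (Suc n)). P cs} \<longleftrightarrow> cs \<in> Cons 1 ` ?A \<union> Cons 2 ` ?B"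
      by (cases cs) (auto simp: C12_Nil C12_Cons)
  qed
  have "card (Cons 1 ` ?A \<union> Cons 2 ` ?B) = card (Cons 1 ` ?A) + card (Cons 2 ` ?B)"
    by (rule card_Un_disjoint) (auto simp: fin_sub)
  also have "card (Cons 1 ` ?A) = card ?A" by (rule card_image) (simp add: inj_on_def)
  also have "card (Cons 2 ` ?B) = card ?B" by (rule card_image) (simp add: inj_on_def)
  finally show ?thesis unfolding cnt_def e .
qed

definition "aa k n = cnt (\<lambda>cs. wp False cs = k) n"
definition "bb k n = cnt (\<lambda>cs. wp True cs = k) n"
definition "ee n = cnt (\<lambda>cs. 2 \<in> set cs \<and> wp True cs = 0) n"
definition "zz n = cnt (\<lambda>cs. wp True cs = 0) n"
definition "onec n = cnt (\<lambda>cs. 2 \<notin> set cs) n"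

lemma aa_SS: "aa k (Suc (Suc n)) = aa k (Suc n) + bb k n"
  by (simp add: aa_def bb_def cnt_SS)

lemma aa_0: "k \<ge> 1 \<Longrightarrow> aa k 0 = 0" by (simp add: aa_def cnt_0)
lemma aa_1: "k \<ge> 1 \<Longrightarrow> aa k (Suc 0) = 0" by (simp add: aa_def cnt_1)
lemma bb_0: "k \<ge> 1 \<Longrightarrow> bb k 0 = 0" by (simp add: bb_def cnt_0)
lemma bb_1: "k \<ge> 1 \<Longrightarrow> bb k (Suc 0) = 0" by (simp add: bb_def cnt_1)

definition "hh k n = (if k = 1 then ee n else bb (k - 1) n)"

lemma bb_SS: assumes "k \<ge> 1" shows "bb k (Suc (Suc n)) = hh k (Suc n) + bb k n"
proof -
  have p1: "(\<lambda>cs. wp True (1#cs) = k) = (\<lambda>cs. 2 \<in> set cs \<and> wp True cs = k - 1)"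
    using assms by (auto simp: fun_eq_iff wp_no2)
  have p2: "(\<lambda>cs. 2 \<in> set cs \<and> wp True cs = k - 1) = (\<lambda>cs. wp True cs = k - 1)" if "k \<noteq> 1"
    using assms that by (auto simp: fun_eq_iff) (metis wp_no2 diff_is_0_eq le_antisym)
  have "bb k (Suc (Suc n)) = cnt (\<lambda>cs. 2 \<in> set cs \<and> wp True cs = k - 1) (Suc n) + bb k n"
    unfolding bb_def cnt_SS p1 by simp
  also have "cnt (\<lambda>cs. 2 \<in> set cs \<and> wp True cs = k - 1) (Suc n) = hh k (Suc n)"
    unfolding hh_def ee_def bb_def using p2 by auto
  finally show ?thesis .
qed

lemma ee_SS: "ee (Suc (Suc n)) = zz n"
proof -
  have "(\<lambda>cs. 2 \<in> set (1#cs) \<and> wp True (1#cs) = 0) = (\<lambda>_. False)" by (auto simp: fun_eq_iff)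
  then show ?thesis unfolding ee_def zz_def cnt_SS by (simp add: cnt_False)
qed
lemma ee_0: "ee 0 = 0" by (simp add: ee_def cnt_0)
lemma ee_1: "ee (Suc 0) = 0" by (simp add: ee_def cnt_1)

lemma zz_SS: "zz (Suc (Suc n)) = onec (Suc n) + zz n"
proof -
  have "(\<lambda>cs. wp True (1#cs) = 0) = (\<lambda>cs. 2 \<notin> set cs)" by (auto simp: fun_eq_iff wp_no2)
  then show ?thesis unfolding onec_def zz_def cnt_SS by simp
qed
lemma zz_0: "zz 0 = 1" by (simp add: zz_def cnt_0)
lemma zz_1: "zz (Suc 0) = 1" by (simp add: zz_def cnt_1)

lemma onec_SS: "onec (Suc (Suc n)) = onec (Suc n)"
  unfolding onec_def cnt_SS by (simp add: cnt_False)

lemma onec_1: "onec n = 1"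
proof -
  have "onec n = 1 \<and> onec (Suc n) = 1"
  proof (induction n)
    case 0 show ?case by (simp add: onec_def cnt_0 cnt_1)
  next
    case (Suc n) then show ?case by (simp add: onec_SS)
  qed
  then show ?thesis by simp
qed


lemma shift1:
  fixes f g :: "nat \<Rightarrow> rat"
  assumes "\<And>n. f (Suc n) = g (Suc n) + f n" "f 0 = g 0"
  shows "Abs_fps f * (1 - fps_X) = Abs_fps g"
proof (rule fps_ext)
  fix n
  have "Abs_fps f * (1 - fps_X) = Abs_fps f - fps_X * Abs_fps f" by (simp add: algebra_simps)
  then show "fps_nth (Abs_fps f * (1 - fps_X)) n = fps_nth (Abs_fps g) n" using assms by (cases n) auto
qed

lemma shift2:
  fixes f g :: "nat \<Rightarrow> rat"
  assumes "\<And>n. f (Suc (Suc n)) = g (Suc (Suc n)) + f n" "f 0 = g 0" "f 1 = g 1"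
  shows "Abs_fps f * (1 - fps_X^2) = Abs_fps g"
proof (rule fps_ext)
  fix n
  have E: "Abs_fps f * (1 - fps_X^2) = Abs_fps f - fps_X^2 * Abs_fps f" by (simp add: algebra_simps)
  then show "fps_nth (Abs_fps f * (1 - fps_X^2)) n = fps_nth (Abs_fps g) n"
  proof (cases n)
    case 0 then show ?thesis using assms E by (simp add: fps_X_power_mult_nth)
  next
    case (Suc m) then show ?thesis using assms E
      by (cases m) (simp_all add: fps_X_power_mult_nth)
  qed
qed

lemma Xshift1: "Abs_fps (\<lambda>n. if n = 0 then 0 else h (n - 1)) = (fps_X :: rat fps) * Abs_fps h"
  by (rule fps_ext) simp

lemma Xshift2: "Abs_fps (\<lambda>n. if n < 2 then 0 else h (n - 2)) = (fps_X :: rat fps)^2 * Abs_fps h"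
  by (rule fps_ext) (simp add: fps_X_power_mult_nth)

definition "FA k = Abs_fps (\<lambda>n. of_nat (aa k n) :: rat)"
definition "FB k = Abs_fps (\<lambda>n. of_nat (bb k n) :: rat)"
definition "FH k = Abs_fps (\<lambda>n. of_nat (hh k n) :: rat)"
definition "FE = Abs_fps (\<lambda>n. of_nat (ee n) :: rat)"
definition "FZ = Abs_fps (\<lambda>n. of_nat (zz n) :: rat)"
definition "FO = Abs_fps (\<lambda>n. 1 :: rat)"

lemma FA_eq: assumes "k \<ge> 1" shows "FA k * (1 - fps_X) = fps_X^2 * FB k"
proof -
  have "FA k * (1 - fps_X) = Abs_fps (\<lambda>n. if n < 2 then 0 else of_nat (bb k (n - 2)))"
    unfolding FA_def
  proof (rule shift1)
    fix n show "of_nat (aa k (Suc n)) = (if Suc n < 2 then 0 else of_nat (bb k (Suc n - 2))) + (of_nat (aa k n) :: rat)"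
      using assms by (cases n) (simp_all add: aa_0 aa_1 aa_SS)
  qed (simp add: aa_0[OF assms])
  then show ?thesis unfolding FB_def using Xshift2[of "\<lambda>n. of_nat (bb k n) :: rat"] by simp
qed

lemma FB_eq: assumes "k \<ge> 1" shows "FB k * (1 - fps_X^2) = fps_X * FH k"
proof -
  have h0: "hh k 0 = 0" unfolding hh_def using assms by (simp add: ee_0 bb_0)
  have "FB k * (1 - fps_X^2) = Abs_fps (\<lambda>n. if n = 0 then 0 else of_nat (hh k (n - 1)))"
    unfolding FB_def
    by (rule shift2) (simp_all add: bb_SS[OF assms] bb_0[OF assms] bb_1[OF assms] h0)
  then show ?thesis unfolding FH_def using Xshift1[of "\<lambda>n. of_nat (hh k n) :: rat"] by simp
qed

lemma FE_eq: "FE = fps_X^2 * FZ"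
proof -
  have "FE = Abs_fps (\<lambda>n. if n < 2 then 0 else of_nat (zz (n - 2)))"
    unfolding FE_def
  proof (rule fps_ext)
    fix n show "fps_nth (Abs_fps (\<lambda>n. of_nat (ee n))) n = fps_nth (Abs_fps (\<lambda>n. if n < 2 then 0 else of_nat (zz (n - 2)) :: rat)) n"
    proof (cases n)
      case 0 then show ?thesis by (simp add: ee_0)
    next
      case (Suc m) then show ?thesis by (cases m) (simp_all add: ee_1 ee_SS)
    qed
  qed
  then show ?thesis unfolding FZ_def using Xshift2[of "\<lambda>n. of_nat (zz n) :: rat"] by simp
qed

lemma FZ_eq: "FZ * (1 - fps_X^2) = FO"
  unfolding FZ_def FO_def by (rule shift2) (simp_all add: zz_SS zz_0 zz_1 onec_1)

lemma FO_eq: "FO * (1 - fps_X) = 1"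
proof -
  have "FO * (1 - fps_X) = Abs_fps (\<lambda>n. if n = 0 then 1 else 0)"
    unfolding FO_def by (rule shift1) simp_all
  also have "\<dots> = 1" by (rule fps_ext) simp
  finally show ?thesis .
qed

lemma FB_closed: "k \<ge> 1 \<Longrightarrow> FB k * (1 - fps_X) * (1 - fps_X^2)^(k+1) = fps_X^(k+2)"
proof (induction k rule: nat_induct_at_least)
  case base
  have "FB 1 * (1 - fps_X) * (1 - fps_X^2)^(1+1) = fps_X * (FE * (1 - fps_X^2) * (1 - fps_X))"
  proof -
    have "FB 1 * (1 - fps_X) * (1 - fps_X^2)^(1+1) = (FB 1 * (1 - fps_X^2)) * (1 - fps_X) * (1 - fps_X^2)"
      by (simp add: power2_eq_square mult_ac)
    also have "\<dots> = fps_X * FH 1 * (1 - fps_X) * (1 - fps_X^2)" using FB_eq[of 1] by simp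
    also have "FH 1 = FE" unfolding FH_def FE_def hh_def by simp
    finally show ?thesis by (simp add: mult_ac)
  qed
  also have "FE * (1 - fps_X^2) * (1 - fps_X) = fps_X^2 * ((FZ * (1 - fps_X^2)) * (1 - fps_X))"
    unfolding FE_eq by (simp add: mult_ac)
  also have "\<dots> = fps_X^2" unfolding FZ_eq FO_eq by simp
  finally show ?case by (simp add: power_add power2_eq_square mult_ac)
next
  case (Suc k)
  have "FB (Suc k) * (1 - fps_X) * (1 - fps_X^2)^(Suc k+1) = (FB (Suc k) * (1 - fps_X^2)) * ((1 - fps_X) * (1 - fps_X^2)^(k+1))"
    by (simp add: mult_ac)
  also have "\<dots> = fps_X * (FH (Suc k) * (1 - fps_X) * (1 - fps_X^2)^(k+1))"
    using FB_eq[of "Suc k"] by (simp add: mult_ac)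
  also have "FH (Suc k) = FB k" unfolding FH_def FB_def hh_def using Suc.hyps by simp
  also have "fps_X * (FB k * (1 - fps_X) * (1 - fps_X^2)^(k+1)) = fps_X^(Suc k + 2)"
    using Suc.IH by simp
  finally show ?case .
qed

lemma FA_closed: assumes "k \<ge> 1"
  shows "FA k * ((1 - fps_X)^2 * (1 - fps_X^2)^(k+1)) = fps_X^(k+4)"
proof -
  have "FA k * ((1 - fps_X)^2 * (1 - fps_X^2)^(k+1)) = (FA k * (1 - fps_X)) * ((1 - fps_X) * (1 - fps_X^2)^(k+1))"
    by (simp add: power2_eq_square mult_ac)
  also have "\<dots> = fps_X^2 * (FB k * (1 - fps_X) * (1 - fps_X^2)^(k+1))"
    using FA_eq[OF assms] by (simp add: mult_ac)
  also have "\<dots> = fps_X^2 * fps_X^(k+2)" using FB_closed[OF assms] by simp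
  also have "\<dots> = fps_X^(k+4)"
  proof -
    have e: "k+4 = 2+(k+2)" by simp
    show ?thesis unfolding e power_add ..
  qed
  finally show ?thesis .
qed

lemma w_aa: "w n k = aa k n"
proof -
  have "W n k = {cs \<in> C12 n. wp False cs = k}"
    unfolding W_def using wc_wp by (auto simp: C12_def)
  then show ?thesis unfolding w_def aa_def cnt_def by simp
qed

theorem theorem2p2:
  fixes k :: nat
  assumes "k \<ge> 1"
  shows "Abs_fps (\<lambda>n. of_nat (w n k) :: rat) =
         fps_X ^ (k + 4) / ((1 - fps_X) ^ 2 * (1 - fps_X ^ 2) ^ (k + 1))"
proof -
  have L: "Abs_fps (\<lambda>n. of_nat (w n k) :: rat) = FA k" unfolding FA_def w_aa ..
  have n1: "(1 - fps_X :: rat fps) \<noteq> 0"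
  proof
    assume "(1 - fps_X :: rat fps) = 0"
    then have "fps_nth (1 - fps_X :: rat fps) 0 = 0" by simp
    then show False by simp
  qed
  have n2: "(1 - fps_X^2 :: rat fps) \<noteq> 0"
  proof
    assume "(1 - fps_X^2 :: rat fps) = 0"
    then have "fps_nth (1 - fps_X^2 :: rat fps) 0 = 0" by simp
    then show False by (simp add: fps_X_power_nth)
  qed
  have D: "((1 - fps_X) ^ 2 * (1 - fps_X ^ 2) ^ (k + 1) :: rat fps) \<noteq> 0"
    using n1 n2 by simp
  have "fps_X ^ (k + 4) / ((1 - fps_X) ^ 2 * (1 - fps_X ^ 2) ^ (k + 1))
      = FA k * ((1 - fps_X)^2 * (1 - fps_X^2)^(k+1)) / ((1 - fps_X) ^ 2 * (1 - fps_X ^ 2) ^ (k + 1))"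
    using FA_closed[OF assms] by simp
  also have "\<dots> = FA k" using D by (rule nonzero_mult_div_cancel_right)
  finally show ?thesis using L by simp
qed

end
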